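(* Let $0<c<1$ and let $(t_n)_{n\geq1}$ satisfy $1<t_n<2$ for all $n$. Put $a_n=c^{t_n^n}$ and $F_n(z,w)=(z^2+a_nw,\ a_nz)$. Let $\Omega=\{(z,w)\in\mathbb{C}^2:F_n\circ\cdots\circ F_1(z,w)\to0\}$, let $K\subseteq\Omega$ be compact, and set $\delta_n=\max\{|z_n|,|w_n|:(z,w)\in K\}$ where $(z_n,w_n)=F_n\circ\cdots\circ F_1(z,w)$. Suppose that for arbitrarily large $n$ there is an integer $k(n)\geq1$ with $t_{n+k(n)+1}\leq 2^{\frac{k(n)}{n+k(n)+1}}$. Then there exist arbitrarily large $n$ with $\delta_n\leq a_{n+1}$. *)

theory Defs
  imports "HOL-Analysis.Analysis"
begin

definition seq_a :: "real \<Rightarrow> (nat \<Rightarrow> real) \<Rightarrow> nat \<Rightarrow> real" where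
  "seq_a c t n = c powr (t n ^ n)"

definition mapF :: "real \<Rightarrow> (nat \<Rightarrow> real) \<Rightarrow> nat \<Rightarrow> complex \<times> complex \<Rightarrow> complex \<times> complex" where
  "mapF c t n p = ((fst p)^2 + complex_of_real (seq_a c t n) * snd p,
                   complex_of_real (seq_a c t n) * fst p)"

fun orbit :: "real \<Rightarrow> (nat \<Rightarrow> real) \<Rightarrow> nat \<Rightarrow> complex \<times> complex \<Rightarrow> complex \<times> complex" where
  "orbit c t 0 p = p"
| "orbit c t (Suc n) p = mapF c t (Suc n) (orbit c t n p)"

definition basin :: "real \<Rightarrow> (nat \<Rightarrow> real) \<Rightarrow> (complex \<times> complex) set" where
  "basin c t = {p. (\<lambda>n. orbit c t n p) \<longlonglongrightarrow> (0, 0)}"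

definition delta :: "real \<Rightarrow> (nat \<Rightarrow> real) \<Rightarrow> (complex \<times> complex) set \<Rightarrow> nat \<Rightarrow> real" where
  "delta c t K n = (SUP p\<in>K. max (cmod (fst (orbit c t n p))) (cmod (snd (orbit c t n p))))"

end

theory Submission
  imports Defs
begin

definition mm :: "real \<Rightarrow> (nat \<Rightarrow> real) \<Rightarrow> nat \<Rightarrow> complex \<times> complex \<Rightarrow> real" where
  "mm c t n p = max (cmod (fst (orbit c t n p))) (cmod (snd (orbit c t n p)))"

lemma orbit_cont: "continuous_on UNIV (\<lambda>p. orbit c t n p)"
proof (induction n)
  case 0 then show ?case by (simp add: continuous_on_id)
next
  case (Suc n)
  have "continuous_on UNIV (\<lambda>p. ((fst (orbit c t n p))^2 + complex_of_real (seq_a c t (Suc n)) * snd (orbit c t n p),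
                   complex_of_real (seq_a c t (Suc n)) * fst (orbit c t n p)))"
    using Suc by (intro continuous_intros) auto
  then show ?case by (simp add: mapF_def)
qed

lemma mm_cont: "continuous_on UNIV (mm c t n)"
proof -
  have "continuous_on UNIV (\<lambda>p. max (cmod (fst (orbit c t n p))) (cmod (snd (orbit c t n p))))"
    using orbit_cont[of c t n] by (intro continuous_intros) auto
  then show ?thesis by (simp add: mm_def[abs_def])
qed

lemma seq_a_nonneg: "0 \<le> seq_a c t n"
  by (simp add: seq_a_def)

lemma mm_step: "mm c t (Suc n) p \<le> (mm c t n p)^2 + seq_a c t (Suc n) * mm c t n p"
proof -
  define z where "z = fst (orbit c t n p)"
  define w where "w = snd (orbit c t n p)"
  define a where "a = seq_a c t (Suc n)"
  define m where "m = mm c t n p"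
  have a0: "0 \<le> a" unfolding a_def by (rule seq_a_nonneg)
  have zm: "cmod z \<le> m" and wm: "cmod w \<le> m" unfolding m_def mm_def z_def w_def by auto
  have m0: "0 \<le> m" using zm norm_ge_zero order_trans by blast
  have "cmod (z^2 + complex_of_real a * w) \<le> cmod z ^2 + a * cmod w"
    using a0 by (metis abs_of_nonneg norm_mult norm_of_real norm_power norm_triangle_ineq)
  also have "\<dots> \<le> m^2 + a * m"
    using zm wm a0 by (intro add_mono power_mono mult_left_mono) auto
  finally have 1: "cmod (z^2 + complex_of_real a * w) \<le> m^2 + a * m" .
  have "cmod (complex_of_real a * z) = a * cmod z" using a0 by (simp add: norm_mult)
  also have "\<dots> \<le> a * m" using zm a0 by (simp add: mult_left_mono)
  also have "\<dots> \<le> m^2 + a * m" by simp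
  finally have 2: "cmod (complex_of_real a * z) \<le> m^2 + a * m" .
  show ?thesis using 1 2 unfolding z_def w_def a_def m_def by (simp add: mm_def mapF_def)
qed

lemma seq_a_le_c:
  assumes "0 < c" "c < 1" "1 < t n"
  shows "seq_a c t n \<le> c"
proof -
  have "1 \<le> t n ^ n" using assms by (simp add: one_le_power)
  then have "c powr (t n ^ n) \<le> c powr 1" using assms by (intro powr_mono') auto
  then show ?thesis using assms by (simp add: seq_a_def)
qed

lemma seq_a_ge:
  assumes "0 < c" "c < 1" "0 < t m" "m \<ge> 1" "t m \<le> 2 powr (real k / real m)"
  shows "c ^ (2^k) \<le> seq_a c t m"
proof -
  have "t m ^ m \<le> (2 powr (real k / real m)) ^ m"
    using assms by (intro power_mono) auto
  also have "\<dots> = 2 powr (real k / real m * real m)"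
    by (simp add: powr_realpow[symmetric] powr_powr)
  also have "\<dots> = 2 ^ k" using assms by (simp add: powr_realpow)
  finally have "t m ^ m \<le> 2 ^ k" .
  then have "c powr (2 ^ k) \<le> c powr (t m ^ m)" using assms by (intro powr_mono') auto
  moreover have "c powr (2 ^ k) = c ^ (2^k)" using assms
    by (metis of_nat_numeral of_nat_power powr_realpow)
  ultimately show ?thesis by (simp add: seq_a_def)
qed


lemma mm_nonneg: "0 \<le> mm c t n p"
  unfolding mm_def by (simp add: le_max_iff_disj)

lemma mm_le_norm: "mm c t n p \<le> norm (orbit c t n p)"
proof -
  obtain x y where xy: "orbit c t n p = (x, y)" by fastforce
  show ?thesis using norm_fst_le[of x y] norm_snd_le[of y x] by (simp add: mm_def xy)
qed

lemma mm_invariant: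
  assumes "0 < c" "c < 1" "\<And>n. n \<ge> 1 \<Longrightarrow> 1 < t n \<and> t n < 2"
    and "\<rho> \<le> 1 - c" "mm c t n p < \<rho>" "n \<le> n'"
  shows "mm c t n' p < \<rho>"
  using assms(6,5)
proof (induction n' rule: dec_induct)
  case base then show ?case by simp
next
  case (step j)
  define m where "m = mm c t j p"
  have m0: "0 \<le> m" by (simp add: m_def mm_nonneg)
  have ac: "seq_a c t (Suc j) \<le> c" using assms(1,2) assms(3)[of "Suc j"] by (intro seq_a_le_c) auto
  have "mm c t (Suc j) p \<le> m^2 + seq_a c t (Suc j) * m" unfolding m_def by (rule mm_step)
  also have "\<dots> \<le> m^2 + c * m" using ac m0 by (simp add: mult_right_mono)
  also have "\<dots> = m * (m + c)" by (simp add: power2_eq_square algebra_simps)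
  also have "\<dots> \<le> m * 1" using step m0 assms(4) unfolding m_def by (intro mult_left_mono) auto
  finally show ?case using step unfolding m_def by simp
qed

theorem lemma4p2:
  fixes c :: real and t :: "nat \<Rightarrow> real" and K :: "(complex \<times> complex) set"
  assumes "0 < c" "c < 1"
    and "\<And>n. n \<ge> 1 \<Longrightarrow> 1 < t n \<and> t n < 2"
    and "compact K" "K \<noteq> {}" "K \<subseteq> basin c t"
    and "\<forall>N. \<exists>n\<ge>N. \<exists>k::nat. k \<ge> 1 \<and>
            t (n + k + 1) \<le> 2 powr (real k / real (n + k + 1))"
  shows "\<forall>N. \<exists>n\<ge>N. delta c t K n \<le> seq_a c t (n + 1)"
proof (rule ccontr)
  assume "\<not> ?thesis"
  then obtain N where N: "\<And>n. n \<ge> N \<Longrightarrow> seq_a c t (n + 1) < delta c t K n"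
    by (auto simp: not_le) (meson not_le)
  define \<rho> where "\<rho> = min (c/2) (1 - c)"
  have rho0: "0 < \<rho>" using assms(1,2) by (simp add: \<rho>_def)
  have rho1: "\<rho> \<le> 1 - c" "\<rho> \<le> c/2" unfolding \<rho>_def by linarith+
  have deq: "\<And>n. delta c t K n = (SUP p\<in>K. mm c t n p)"
    by (simp add: delta_def mm_def)
  have bdd: "\<And>n. bdd_above (mm c t n ` K)"
  proof -
    fix n
    have "compact (mm c t n ` K)"
      using assms(4) continuous_on_subset[OF mm_cont[of c t n]]
      by (intro compact_continuous_image) auto
    then show "bdd_above (mm c t n ` K)"
      by (intro bounded_imp_bdd_above compact_imp_bounded)
  qed
  have cover: "K \<subseteq> (\<Union>n\<in>UNIV. {p. mm c t n p < \<rho>})"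
  proof
    fix p assume "p \<in> K"
    then have "(\<lambda>n. orbit c t n p) \<longlonglongrightarrow> (0, 0)" using assms(6) by (auto simp: basin_def)
    from LIMSEQ_D[OF this rho0] obtain n where "norm (orbit c t n p - (0,0)) < \<rho>" by blast
    moreover have "orbit c t n p - (0,0) = orbit c t n p" by (simp add: prod_eq_iff)
    ultimately have "mm c t n p < \<rho>" using mm_le_norm[of c t n p] by simp
    then show "p \<in> (\<Union>n\<in>UNIV. {p. mm c t n p < \<rho>})" by blast
  qed
  obtain C' where C': "finite C'" "K \<subseteq> (\<Union>n\<in>C'. {p. mm c t n p < \<rho>})"
  proof (rule compactE_image[OF assms(4) _ cover])
    fix n :: nat show "open {p. mm c t n p < \<rho>}"
      by (rule open_Collect_less[OF mm_cont continuous_on_const])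
  qed auto
  define M where "M = Max (insert 0 C')"
  have unif: "\<And>n p. n \<ge> M \<Longrightarrow> p \<in> K \<Longrightarrow> mm c t n p < \<rho>"
  proof -
    fix n p assume n: "n \<ge> M" and p: "p \<in> K"
    then obtain j where j: "j \<in> C'" "mm c t j p < \<rho>" using C' by blast
    have "j \<le> M" using j C' by (simp add: M_def)
    then show "mm c t n p < \<rho>" using mm_invariant[OF assms(1,2,3) rho1(1) j(2)] n by simp
  qed
  obtain n k where nk: "n \<ge> max N M" "k \<ge> 1" "t (n + k + 1) \<le> 2 powr (real k / real (n + k + 1))"
    using assms(7) by blast
  have claim: "j \<le> k \<Longrightarrow> delta c t K (n + j) \<le> c ^ (2 ^ j) / 2" for j
  proof (induction j)
    case 0
    have "delta c t K n \<le> \<rho>"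
      unfolding deq using unif nk(1) assms(5) by (intro cSUP_least) (auto intro: less_imp_le)
    then show ?case using rho1 by simp
  next
    case (Suc j)
    define d where "d = delta c t K (n + j)"
    have IH: "d \<le> c ^ (2 ^ j) / 2" using Suc by (simp add: d_def)
    have ad: "seq_a c t (Suc (n + j)) < d" using N[of "n + j"] nk(1) by (simp add: d_def)
    have d0: "0 \<le> d" using ad seq_a_nonneg[of c t "Suc (n+j)"] by simp
    have "d * d \<le> (c ^ (2 ^ j) / 2) * (c ^ (2 ^ j) / 2)" using IH d0 by (intro mult_mono) auto
    also have "\<dots> = c ^ (2 ^ Suc j) / 4" by (simp add: power_mult power2_eq_square power_mult_distrib mult.commute)
    finally have dd: "2 * (d * d) \<le> c ^ (2 ^ Suc j) / 2" by simp
    have "delta c t K (n + Suc j) \<le> 2 * (d * d)"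
      unfolding deq
    proof (rule cSUP_least[OF assms(5)])
      fix p assume p: "p \<in> K"
      have mp: "mm c t (n + j) p \<le> d" unfolding d_def deq using p bdd by (intro cSUP_upper)
      have m0: "0 \<le> mm c t (n + j) p" by (rule mm_nonneg)
      have "mm c t (n + Suc j) p \<le> (mm c t (n + j) p)^2 + seq_a c t (Suc (n + j)) * mm c t (n + j) p"
        using mm_step[of c t "n + j" p] by simp
      also have "\<dots> \<le> d * d + d * d"
        using mp m0 ad seq_a_nonneg[of c t "Suc (n+j)"] d0
        by (intro add_mono mult_mono) (auto simp: power2_eq_square intro: mult_mono)
      finally show "mm c t (n + Suc j) p \<le> 2 * (d * d)" by simp
    qed
    then show ?case using dd by simp
  qed
  have "delta c t K (n + k) \<le> c ^ (2 ^ k) / 2" using claim by simp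
  moreover have "c ^ (2 ^ k) \<le> seq_a c t (n + k + 1)"
    using assms(1,2) assms(3)[of "n + k + 1"] nk(3) by (intro seq_a_ge) auto
  moreover have "seq_a c t (n + k + 1) < delta c t K (n + k)" using N[of "n + k"] nk(1) by simp
  moreover have "0 < c ^ (2 ^ k)" using assms(1) by simp
  ultimately show False by simp
qed

end
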